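(* For every $n\ge0$, the normalized median Genocchi number satisfies $$h_n=\sum_{\mathbf f\in M_n}\prod_{k=0}^{n-1}w(f_k,f_{k+1}),$$ where $w(k,k)=\gamma_k$, $w(k,k+1)=\alpha_k$, $w(k,k-1)=\beta_{k-1}$ with $\alpha_m=\beta_m=\frac{(m+1)(m+2)}{2}$ and $\gamma_m=(m+1)^2$. Moreover, as formal power series, $$\sum_{n\ge0}h_ns^n=\cfrac{1}{1-\cfrac{s}{1-\cfrac{s}{1-\cfrac{3s}{1-\cfrac{3s}{1-\cfrac{6s}{1-\cfrac{6s}{1-\cfrac{10s}{1-\cdots}}}}}}}},$$ where the partial numerators are $d_{2m-1}s=d_{2m}s=\binom{m+1}{2}s$ for $m\ge1$.
   Context: $M_n$ denotes the set of Motzkin paths of length $n$: sequences $\mathbf f=(f_0,\dots,f_n)$ of nonnegative integers with $f_0=f_n=0$ and $|f_{k+1}-f_k|\le1$. The normalized median Genocchi numbers are $h_n=H_{2n+1}/2^n$ ($h_0,h_1,h_2,\dots=1,1,2,7,38,295,\dots$), where the median Genocchi numbers $H_{2n-1}=g_{1,2n}$ come from the Seidel triangle: numbers $g_{k,m}$, $m\ge1$, $1\le k\le (m+1)/2$, with $g_{1,1}=1$, $g_{k,2m}=\sum_{i\ge k}g_{i,2m-1}$, $g_{k,2m+1}=\sum_{i\le k}g_{i,2m}$. It is known that $h_n=h_n(1)$, where $h_n(q)$ is the Poincaré polynomial (in $q=t^2$) of the degenerate flag variety $\mathrm{Fl}^a_n$ (tuples $(V_1,\dots,V_{n-1})$ of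 subspaces of $\mathbb C^n$ with basis $w_1,\dots,w_n$, $\dim V_k=k$, $pr_{k+1}V_k\subset V_{k+1}$, $pr_k$ killing the $w_k$-coordinate), and that $h_n(q)=\sum_{f_1,\dots,f_{n-1}\ge 0} q^{\sum_{k=1}^{n-1}(k-f_k)(1-f_k+f_{k+1})}\prod_{k=1}^{n-1}\binom{1+f_{k-1}}{f_k}_{q}\binom{1+f_{k+1}}{f_k}_{q}$ with $f_0=f_n=0$, Gaussian binomials $\binom{m}{k}_q$ (zero unless $0\le k\le m$). *)

theory Defs
  imports "HOL-Computational_Algebra.Formal_Power_Series"
begin

text \<open>Seidel triangle: seidel m k = g_{k,m}, zero outside 1 <= k <= (m+1)/2.\<close>
fun seidel :: "nat \<Rightarrow> nat \<Rightarrow> nat" where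
  "seidel 0 k = 0"
| "seidel (Suc 0) k = (if k = 1 then 1 else 0)"
| "seidel (Suc (Suc m)) k =
     (if k < 1 \<or> k > (m + 3) div 2 then 0
      else if even (Suc (Suc m)) then (\<Sum>i\<in>{k..(m + 2) div 2}. seidel (Suc m) i)
      else (\<Sum>i\<in>{1..k}. seidel (Suc m) i))"

text \<open>Median Genocchi number H_{2n-1} = g_{1,2n}.\<close>
definition median_genocchi :: "nat \<Rightarrow> nat" where
  "median_genocchi n = seidel (2 * n) 1"

text \<open>Normalized median Genocchi number h_n = H_{2n+1} / 2^n = g_{1,2n+2} / 2^n.\<close>
definition hnorm :: "nat \<Rightarrow> rat" where
  "hnorm n = of_nat (median_genocchi (n + 1)) / 2 ^ n"

text \<open>Motzkin paths of length n, as functions nat => nat vanishing beyond n.\<close>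
definition motzkin :: "nat \<Rightarrow> (nat \<Rightarrow> nat) set" where
  "motzkin n = {f. f 0 = 0 \<and> f n = 0 \<and>
      (\<forall>k<n. f (Suc k) \<le> f k + 1 \<and> f k \<le> f (Suc k) + 1) \<and> (\<forall>k>n. f k = 0)}"

definition alpha :: "nat \<Rightarrow> nat" where "alpha m = (m + 1) * (m + 2) div 2"
definition beta  :: "nat \<Rightarrow> nat" where "beta m = (m + 1) * (m + 2) div 2"
definition gamma :: "nat \<Rightarrow> nat" where "gamma m = (m + 1)^2"

definition wt :: "nat \<Rightarrow> nat \<Rightarrow> nat" where
  "wt a b = (if b = a then gamma a
             else if b = a + 1 then alpha a
             else if a = b + 1 then beta b else 0)"

text \<open>Partial numerator coefficients: d_{2m-1} = d_{2m} = binom(m+1,2), m >= 1.\<close>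
definition dcf :: "nat \<Rightarrow> nat" where
  "dcf j = ((j + 1) div 2 + 1) choose 2"

fun cf :: "nat \<Rightarrow> nat \<Rightarrow> rat fps" where
  "cf j 0 = 1"
| "cf j (Suc N) = inverse (1 - fps_const (of_nat (dcf j)) * fps_X * cf (Suc j) N)"

end

theory Submission
  imports Defs
begin

unbundle fps_syntax


declare seidel.simps(3)[simp del]

definition Mp :: "nat \<Rightarrow> int" where
  "Mp p = (if p = 0 then 1 else int (seidel (2*p) 1))"

definition Gs :: "nat \<Rightarrow> nat \<Rightarrow> int" where
  "Gs n k = Mp (n+1) - (\<Sum>i\<le>n. (-1)^i * int ((k+i) choose (2*i+2)) * Mp (n-i))"

definition Os :: "nat \<Rightarrow> nat \<Rightarrow> int" where
  "Os n k = (\<Sum>i\<le>n. (-1)^i * int ((k+i) choose (2*i+1)) * Mp (n-i))"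

lemma Os_diff: "Os n k = Gs n k - Gs n (Suc k)"
proof -
  have "Gs n k - Gs n (Suc k) = (\<Sum>i\<le>n. (-1)^i * int ((Suc k+i) choose (2*i+2)) * Mp (n-i))
        - (\<Sum>i\<le>n. (-1)^i * int ((k+i) choose (2*i+2)) * Mp (n-i))"
    by (simp add: Gs_def)
  also have "\<dots> = (\<Sum>i\<le>n. (-1)^i * int ((k+i) choose (2*i+1)) * Mp (n-i))"
    unfolding sum_subtractf[symmetric]
  proof (rule sum.cong[OF refl])
    fix i
    have "(Suc k + i) choose (2*i+2) = ((k+i) choose (2*i+1)) + ((k+i) choose (2*i+2))"
      using binomial_Suc_Suc[of "k+i" "2*i+1"] by simp
    then show "(-1)^i * int ((Suc k+i) choose (2*i+2)) * Mp (n-i) - (-1)^i * int ((k+i) choose (2*i+2)) * Mp (n-i)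
       = (-1)^i * int ((k+i) choose (2*i+1)) * Mp (n-i)"
      by (simp add: algebra_simps)
  qed
  finally show ?thesis by (simp add: Os_def)
qed

lemma Os_0: "Os n 0 = 0"
  by (simp add: Os_def binomial_eq_0)

lemma Gs_1: "Gs n 1 = Mp (n+1)"
  by (simp add: Gs_def binomial_eq_0)

lemma Os_step: "Os (Suc n) (Suc k) = Os (Suc n) k + Gs n (Suc k)"
proof -
  have "Os (Suc n) (Suc k) - Os (Suc n) k =
     (\<Sum>i\<le>Suc n. (-1)^i * int ((k+i) choose (2*i)) * Mp (Suc n-i))"
    unfolding Os_def sum_subtractf[symmetric]
  proof (rule sum.cong[OF refl])
    fix i
    have "(Suc k + i) choose (2*i+1) = ((k+i) choose (2*i)) + ((k+i) choose (2*i+1))"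
      using binomial_Suc_Suc[of "k+i" "2*i"] by simp
    then show "(-1)^i * int ((Suc k+i) choose (2*i+1)) * Mp (Suc n-i) - (-1)^i * int ((k+i) choose (2*i+1)) * Mp (Suc n-i)
       = (-1)^i * int ((k+i) choose (2*i)) * Mp (Suc n-i)"
      by (simp add: algebra_simps)
  qed
  also have "\<dots> = Mp (Suc n) + (\<Sum>i\<le>n. (-1)^(Suc i) * int ((k+Suc i) choose (2*Suc i)) * Mp (Suc n - Suc i))"
    by (subst sum.atMost_Suc_shift) simp
  also have "\<dots> = Gs n (Suc k)"
    by (simp add: Gs_def sum_negf[symmetric])
  finally show ?thesis by simp
qed

lemma Os_sum: "Os (Suc n) k = (\<Sum>i\<in>{1..k}. Gs n i)"
proof (induction k)
  case 0 then show ?case by (simp add: Os_0)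
next
  case (Suc k) then show ?case by (simp add: Os_step)
qed

lemma seidel_even_eq: "1 \<le> k \<Longrightarrow> k \<le> n+1 \<Longrightarrow>
   seidel (2*n+2) k = (\<Sum>i\<in>{k..n+1}. seidel (2*n+1) i)"
proof -
  assume a: "1 \<le> k" "k \<le> n+1"
  have q: "seidel (Suc (Suc (2*n))) k = (if k < 1 \<or> k > (2*n + 3) div 2 then 0
      else if even (Suc (Suc (2*n))) then (\<Sum>i\<in>{k..(2*n + 2) div 2}. seidel (Suc (2*n)) i)
      else (\<Sum>i\<in>{1..k}. seidel (Suc (2*n)) i))"
    by (rule seidel.simps(3))
  have d: "(2*n+3) div 2 = n+1" "(2*n+2) div 2 = n+1" by auto
  have e: "2*n+2 = Suc (Suc (2*n))" "2*n+1 = Suc (2*n)" by auto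
  show ?thesis unfolding e using q a d by (simp del: seidel.simps)
qed

lemma seidel_even_out: "seidel (2*n+2) (n+2) = 0"
proof -
  have q: "seidel (Suc (Suc (2*n))) (n+2) = (if n+2 < 1 \<or> n+2 > (2*n + 3) div 2 then 0
      else if even (Suc (Suc (2*n))) then (\<Sum>i\<in>{n+2..(2*n + 2) div 2}. seidel (Suc (2*n)) i)
      else (\<Sum>i\<in>{1..n+2}. seidel (Suc (2*n)) i))"
    by (rule seidel.simps(3))
  have d: "(2*n+3) div 2 = n+1" by auto
  have e: "2*n+2 = Suc (Suc (2*n))" by auto
  show ?thesis unfolding e using q d by (simp del: seidel.simps)
qed

lemma seidel_odd_eq: "1 \<le> k \<Longrightarrow> k \<le> n+2 \<Longrightarrow>
   seidel (2*n+3) k = (\<Sum>i\<in>{1..k}. seidel (2*n+2) i)"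
proof -
  assume a: "1 \<le> k" "k \<le> n+2"
  have q: "seidel (Suc (Suc (2*n+1))) k = (if k < 1 \<or> k > (2*n+1 + 3) div 2 then 0
      else if even (Suc (Suc (2*n+1))) then (\<Sum>i\<in>{k..(2*n+1 + 2) div 2}. seidel (Suc (2*n+1)) i)
      else (\<Sum>i\<in>{1..k}. seidel (Suc (2*n+1)) i))"
    by (rule seidel.simps(3))
  have d: "(2*n+1+3) div 2 = n+2" by auto
  have e: "2*n+3 = Suc (Suc (2*n+1))" "2*n+2 = Suc (2*n+1)" by auto
  show ?thesis unfolding e using q a d by (simp del: seidel.simps)
qed

lemma main_S: "(\<forall>k. 1 \<le> k \<and> k \<le> n+1 \<longrightarrow> int (seidel (2*n+1) k) = Os n k)"
proof (induction n)
  case 0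
  show ?case by (auto simp: Os_def Mp_def)
next
  case (Suc n)
  have tele: "(\<Sum>i\<in>{k..n+1}. Os n i) = Gs n k - Gs n (n+2)" if "k \<le> n+1" for k
  proof -
    have "(\<Sum>i\<in>{k..n+1}. Os n i) = - (\<Sum>i\<in>{k..n+1}. Gs n (Suc i) - Gs n i)"
      by (simp add: Os_diff sum_negf[symmetric])
    also have "\<dots> = Gs n k - Gs n (n+2)"
      using sum_Suc_diff[of k "n+1" "Gs n"] that by simp
    finally show ?thesis .
  qed
  have ev: "int (seidel (2*n+2) k) = Gs n k - Gs n (n+2)" if "1 \<le> k" "k \<le> n+1" for k
  proof -
    have "int (seidel (2*n+2) k) = (\<Sum>i\<in>{k..n+1}. int (seidel (2*n+1) i))"
      using seidel_even_eq[OF that] by simp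
    also have "\<dots> = (\<Sum>i\<in>{k..n+1}. Os n i)"
      using Suc.IH that by (intro sum.cong) auto
    finally show ?thesis using tele that by simp
  qed
  have z: "Gs n (n+2) = 0"
    using ev[of 1] Gs_1[of n] by (simp add: Mp_def)
  have ev2: "int (seidel (2*n+2) k) = Gs n k" if "1 \<le> k" "k \<le> n+2" for k
  proof (cases "k = n+2")
    case True then show ?thesis using z seidel_even_out by simp
  next
    case False then show ?thesis using ev[of k] that z by simp
  qed
  show ?case
  proof (intro allI impI)
    fix k assume k: "1 \<le> k \<and> k \<le> Suc n + 1"
    have "2*Suc n+1 = 2*n+3" by simp
    then have "int (seidel (2*Suc n+1) k) = int (seidel (2*n+3) k)" by (simp only:)
    also have "\<dots> = (\<Sum>i\<in>{1..k}. int (seidel (2*n+2) i))"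
      using seidel_odd_eq[of k n] k by simp
    also have "\<dots> = (\<Sum>i\<in>{1..k}. Gs n i)"
      using ev2 k by (intro sum.cong) auto
    also have "\<dots> = Os (Suc n) k" by (simp add: Os_sum)
    finally show "int (seidel (2*Suc n+1) k) = Os (Suc n) k" .
  qed
qed

lemma Gs_zero: "Gs n (n+2) = 0"
proof -
  have tele: "(\<Sum>i\<in>{1..n+1}. Os n i) = Gs n 1 - Gs n (n+2)"
  proof -
    have "(\<Sum>i\<in>{1..n+1}. Os n i) = - (\<Sum>i\<in>{1..n+1}. Gs n (Suc i) - Gs n i)"
      by (simp add: Os_diff sum_negf[symmetric])
    also have "\<dots> = Gs n 1 - Gs n (n+2)"
      using sum_Suc_diff[of 1 "n+1" "Gs n"] by simp
    finally show ?thesis .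
  qed
  have "int (seidel (2*n+2) 1) = (\<Sum>i\<in>{1..n+1}. int (seidel (2*n+1) i))"
    using seidel_even_eq[of 1 n] by simp
  also have "\<dots> = (\<Sum>i\<in>{1..n+1}. Os n i)"
    using main_S[of n] by (intro sum.cong) auto
  finally show ?thesis using tele Gs_1[of n] by (simp add: Mp_def)
qed

lemma Mp_rec: "Mp (n+1) = (\<Sum>i\<le>n. (-1)^i * int ((n+2+i) choose (2*i+2)) * Mp (n-i))"
  using Gs_zero[of n] by (simp add: Gs_def)



definition cc :: "nat \<Rightarrow> rat" where "cc m = of_nat m * (of_nat m + 1) / 2"

fun Bt :: "nat \<Rightarrow> nat \<Rightarrow> rat" where
  "Bt 0 m = (if m = 0 then 1 else 0)"
| "Bt (Suc n) m = (if m = 0 then 0 else Bt n (m-1)) - cc m * Bt n m"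

definition Pp :: "nat \<Rightarrow> rat" where "Pp m = (\<Prod>k\<in>{1..m}. cc k)"
definition hp :: "nat \<Rightarrow> rat" where "hp n = (\<Sum>m\<le>n. Pp m * Bt n m)"

definition Sub :: "(nat \<Rightarrow> rat) \<Rightarrow> rat fps" where
  "Sub b = Abs_fps (\<lambda>N. \<Sum>q<N. (-1)^(Suc q) * of_nat ((N - Suc q) choose (Suc q)) * 2^q * b q)"

definition sh :: "(nat \<Rightarrow> rat) \<Rightarrow> nat \<Rightarrow> rat" where "sh b q = (if q = 0 then 0 else b (q-1))"

lemma Sub_sh: "(1 - fps_X) * Sub (sh b) = - 2 * fps_X^2 * Sub b"
proof (rule fps_ext)
  fix N
  show "((1 - fps_X) * Sub (sh b)) $ N = (- 2 * fps_X^2 * Sub b) $ N"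
  proof (cases N)
    case 0 then show ?thesis by (simp add: Sub_def algebra_simps)
  next
    case (Suc N1)
    show ?thesis
    proof (cases N1)
      case 0 then show ?thesis using Suc by (simp add: Sub_def algebra_simps sh_def)
    next
      case (Suc N')
      have NN: "N = Suc (Suc N')" using Suc \<open>N = Suc N1\<close> by simp
      have L1: "Sub (sh b) $ Suc (Suc N') = (\<Sum>q<Suc N'. (-1)^q * of_nat ((N' - q) choose (q+2)) * 2^(q+1) * b q)"
        unfolding Sub_def fps_nth_Abs_fps
        by (subst sum.lessThan_Suc_shift) (simp add: sh_def)
      have L2: "Sub (sh b) $ Suc N' = (\<Sum>q<N'. (-1)^q * of_nat ((N' - Suc q) choose (q+2)) * 2^(q+1) * b q)"
        unfolding Sub_def fps_nth_Abs_fps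
        by (subst sum.lessThan_Suc_shift) (simp add: sh_def)
      have R: "Sub b $ N' = (\<Sum>q<N'. (-1)^(Suc q) * of_nat ((N' - Suc q) choose (Suc q)) * 2^q * b q)"
        by (simp add: Sub_def)
      have L1': "Sub (sh b) $ Suc (Suc N') = (\<Sum>q<N'. (-1)^q * of_nat ((N' - q) choose (q+2)) * 2^(q+1) * b q)"
        using L1 by simp
      have "Sub (sh b) $ Suc (Suc N') - Sub (sh b) $ Suc N' =
            (\<Sum>q<N'. (-1)^q * of_nat ((N' - Suc q) choose (q+1)) * 2^(q+1) * b q)"
        unfolding L1' L2 sum_subtractf[symmetric]
      proof (rule sum.cong[OF refl])
        fix q assume "q \<in> {..<N'}"
        then have "N' - q = Suc (N' - Suc q)" by simp
        then have "(N' - q) choose (q+2) = ((N' - Suc q) choose (q+1)) + ((N' - Suc q) choose (q+2))"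
          by (simp add: numeral_eq_Suc)
        then show "(-1)^q * of_nat ((N' - q) choose (q+2)) * 2^(q+1) * b q -
             (-1)^q * of_nat ((N' - Suc q) choose (q+2)) * 2^(q+1) * b q =
             (-1)^q * of_nat ((N' - Suc q) choose (q+1)) * 2^(q+1) * b q"
          by (simp add: algebra_simps)
      qed
      also have "\<dots> = - 2 * Sub b $ N'"
        unfolding R sum_distrib_left by (intro sum.cong) (auto simp: algebra_simps)
      finally have key: "Sub (sh b) $ Suc (Suc N') - Sub (sh b) $ Suc N' = - 2 * Sub b $ N'" .
      have "((1 - fps_X) * Sub (sh b)) $ N = Sub (sh b) $ Suc (Suc N') - Sub (sh b) $ Suc N'"
        using NN by (simp add: algebra_simps)
      also have "(- 2 * fps_X^2 * Sub b) $ N = - 2 * Sub b $ N'"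
        using NN by (simp add: fps_X_power_mult_nth fps_numeral_fps_const mult.assoc)
      ultimately show ?thesis using key by simp
    qed
  qed
qed

lemma Bt_zero: "n < m \<Longrightarrow> Bt n m = 0"
proof (induction n arbitrary: m)
  case 0 then show ?case by simp
next
  case (Suc n) then show ?case by simp
qed

lemma Bt_0: "Bt q 0 = (if q = 0 then 1 else 0)"
  by (cases q) (simp_all add: cc_def)

lemma Bt_fun: "(\<lambda>q. Bt q (Suc m)) = (\<lambda>q. sh (\<lambda>q. Bt q m) q - cc (Suc m) * sh (\<lambda>q. Bt q (Suc m)) q)"
proof
  fix q show "Bt q (Suc m) = sh (\<lambda>q. Bt q m) q - cc (Suc m) * sh (\<lambda>q. Bt q (Suc m)) q"
    by (cases q) (simp_all add: sh_def)
qed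

lemma Sub_lin: "Sub (\<lambda>q. f q - c * g q) = Sub f - fps_const c * Sub g"
proof (rule fps_ext)
  fix N
  have "(\<Sum>q<N. (-1)^(Suc q) * of_nat ((N - Suc q) choose (Suc q)) * 2^q * (f q - c * g q)) =
    (\<Sum>q<N. (-1)^(Suc q) * of_nat ((N - Suc q) choose (Suc q)) * 2^q * f q) -
    c * (\<Sum>q<N. (-1)^(Suc q) * of_nat ((N - Suc q) choose (Suc q)) * 2^q * g q)"
    unfolding sum_distrib_left sum_subtractf[symmetric] by (rule sum.cong) (auto simp: algebra_simps)
  then show "Sub (\<lambda>q. f q - c * g q) $ N = (Sub f - fps_const c * Sub g) $ N"
    by (simp add: Sub_def)
qed

definition Subm :: "nat \<Rightarrow> rat fps" where "Subm m = Sub (\<lambda>q. Bt q m)"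

lemma Subm_Suc: "(1 - fps_X - fps_const (of_nat ((m+1)*(m+2))) * fps_X^2) * Subm (Suc m) = - 2 * fps_X^2 * Subm m"
proof -
  define p :: rat where "p = of_nat ((m+1)*(m+2))"
  have "Subm (Suc m) = Sub (sh (\<lambda>q. Bt q m)) - fps_const (cc (Suc m)) * Sub (sh (\<lambda>q. Bt q (Suc m)))"
    unfolding Subm_def by (subst Bt_fun) (rule Sub_lin)
  then have "(1 - fps_X) * Subm (Suc m) = (1 - fps_X) * Sub (sh (\<lambda>q. Bt q m)) - fps_const (cc (Suc m)) * ((1 - fps_X) * Sub (sh (\<lambda>q. Bt q (Suc m))))"
    by (simp only:) (simp add: algebra_simps)
  also have "\<dots> = - 2 * fps_X^2 * Subm m - fps_const (cc (Suc m)) * (- 2 * fps_X^2 * Subm (Suc m))"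
    unfolding Sub_sh Subm_def by simp
  also have "fps_const (cc (Suc m)) * (- 2 * fps_X^2 * Subm (Suc m)) = fps_const (cc (Suc m) * (-2)) * (fps_X^2 * Subm (Suc m))"
    by (simp only: fps_numeral_fps_const fps_const_neg fps_const_mult[symmetric] mult.assoc)
  also have "cc (Suc m) * (-2) = - p" by (simp add: cc_def p_def field_simps)
  moreover have neg: "\<And>Y. - (fps_const (-p) * Y) = fps_const p * Y"
    by (metis fps_const_neg minus_minus mult_minus_left)
  ultimately have A: "(1 - fps_X) * Subm (Suc m) = - 2 * fps_X^2 * Subm m + fps_const p * (fps_X^2 * Subm (Suc m))"
    by (simp add: neg)
  have "(1 - fps_X - fps_const p * fps_X^2) * Subm (Suc m) = (1 - fps_X) * Subm (Suc m) - fps_const p * (fps_X^2 * Subm (Suc m))"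
    by (simp add: algebra_simps)
  also have "\<dots> = - 2 * fps_X^2 * Subm m" using A by simp
  finally show ?thesis by (simp add: p_def)
qed

lemma Subm_0_nth: "Subm 0 $ N = - of_nat (N - 1)"
proof (cases N)
  case 0 then show ?thesis by (simp add: Subm_def Sub_def)
next
  case (Suc N1)
  have "Subm 0 $ N = (\<Sum>q<Suc N1. (-1)^(Suc q) * of_nat ((Suc N1 - Suc q) choose (Suc q)) * 2^q * Bt q 0)"
    using Suc by (simp add: Subm_def Sub_def)
  also have "\<dots> = - of_nat N1"
    by (subst sum.lessThan_Suc_shift) (simp add: Bt_0)
  finally show ?thesis using Suc by simp
qed

lemma Subm_0: "(1 - fps_X)^2 * Subm 0 = - (fps_X^2)"
proof (rule fps_ext)
  fix N
  have e: "(1 - fps_X)^2 * Subm 0 = Subm 0 - fps_const 2 * (fps_X * Subm 0) + fps_X^2 * Subm 0"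
    by (simp add: algebra_simps power2_eq_square fps_numeral_fps_const[symmetric])
  show "((1 - fps_X)^2 * Subm 0) $ N = (- (fps_X^2) :: rat fps) $ N"
    unfolding e
    by (cases N; cases "N - 1"; simp add: Subm_0_nth fps_X_power_mult_nth)
qed

definition lin :: "rat \<Rightarrow> rat fps" where "lin a = 1 + fps_const a * fps_X"
definition quad :: "rat \<Rightarrow> rat fps" where "quad a = 1 + fps_const a * fps_X^2"
definition Qf :: "nat \<Rightarrow> rat fps" where "Qf m = (\<Prod>i\<in>{1..m}. quad (- of_nat (i^2)))"

lemma fps_const_m1: "fps_const (-1::rat) = -1"
  by (metis fps_const_1_eq_1 fps_const_neg)

lemma lin_m1: "lin (-1) = 1 - fps_X"
  by (simp add: lin_def fps_const_m1)

lemma cX_mult: "fps_const a * fps_X^i * (fps_const b * fps_X^j) = fps_const (a*b) * (fps_X^(i+j) :: rat fps)"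
  by (rule fps_ext) (auto simp: mult.assoc fps_X_power_mult_nth)

lemma lin_mult: "lin a * lin b = 1 + fps_const (a+b) * fps_X + fps_const (a*b) * fps_X^2"
  unfolding lin_def
  by (simp add: algebra_simps power2_eq_square del: fps_const_add fps_const_mult
      add: fps_const_add[symmetric] fps_const_mult[symmetric])

lemma Qf_Suc: "Qf (Suc m) = Qf m * lin (- of_nat (Suc m)) * lin (of_nat (Suc m))"
proof -
  have "lin (- of_nat (Suc m)) * lin (of_nat (Suc m)) = quad (- of_nat ((Suc m)^2))"
    unfolding lin_mult quad_def by (simp add: power2_eq_square algebra_simps)
  then show ?thesis by (simp add: Qf_def mult.assoc)
qed

lemma Subm_closed: "lin (-1) * Qf m * lin (- of_nat (m+1)) * Subm m = fps_const ((-1)^(m+1) * 2^m) * fps_X^(2*m+2)"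
proof (induction m)
  case 0
  have "lin (-1) * Qf 0 * lin (- of_nat (0+1)) * Subm 0 = (1 - fps_X)^2 * Subm 0"
    by (simp add: lin_m1 Qf_def power2_eq_square)
  also have "\<dots> = - (fps_X^2)" by (rule Subm_0)
  finally show ?case by (simp add: fps_const_m1 power2_eq_square)
next
  case (Suc m)
  have f1: "lin (of_nat (Suc m)) * lin (- of_nat (Suc m + 1)) = 1 - fps_X - fps_const (of_nat ((m+1)*(m+2))) * fps_X^2"
  proof -
    have a1: "of_nat (Suc m) + - of_nat (Suc m + 1) = (-1::rat)" by simp
    have a2: "of_nat (Suc m) * - of_nat (Suc m + 1) = - (of_nat ((m+1)*(m+2)) :: rat)" by (simp add: algebra_simps)
    show ?thesis unfolding lin_mult a1 a2 fps_const_m1 fps_const_neg[symmetric]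
      by (simp add: algebra_simps del: fps_const_neg)
  qed
  have "lin (-1) * Qf (Suc m) * lin (- of_nat (Suc m + 1)) * Subm (Suc m) =
     (lin (-1) * Qf m * lin (- of_nat (m+1))) * ((lin (of_nat (Suc m)) * lin (- of_nat (Suc m + 1))) * Subm (Suc m))"
    by (simp add: Qf_Suc ac_simps)
  also have "\<dots> = (lin (-1) * Qf m * lin (- of_nat (m+1))) * (- 2 * fps_X^2 * Subm m)"
    unfolding f1 Subm_Suc ..
  also have "\<dots> = - 2 * fps_X^2 * (lin (-1) * Qf m * lin (- of_nat (m+1)) * Subm m)"
    by (simp add: ac_simps)
  also have "\<dots> = - 2 * fps_X^2 * (fps_const ((-1)^(m+1) * 2^m) * fps_X^(2*m+2))"
    unfolding Suc.IH ..
  also have "\<dots> = fps_const (-2) * fps_X^2 * (fps_const ((-1)^(m+1) * 2^m) * fps_X^(2*m+2))"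
    by (simp add: fps_numeral_fps_const)
  also have "\<dots> = fps_const ((-1)^(Suc m+1) * 2^(Suc m)) * fps_X^(2*Suc m+2)"
    unfolding cX_mult by (simp add: ac_simps)
  finally show ?case .
qed

definition evenf :: "rat fps \<Rightarrow> bool" where "evenf g \<longleftrightarrow> (\<forall>n. odd n \<longrightarrow> g $ n = 0)"
definition Ev :: "rat fps \<Rightarrow> rat fps" where "Ev f = Abs_fps (\<lambda>n. if even n then 2 * f $ n else 0)"

lemma Ev_mult: assumes g: "evenf g" shows "Ev (f * g) = Ev f * g"
proof (rule fps_ext)
  fix n
  show "Ev (f * g) $ n = (Ev f * g) $ n"
  proof (cases "even n")
    case True
    have "Ev (f * g) $ n = (\<Sum>i=0..n. 2 * (f $ i * g $ (n - i)))"
      using True by (simp add: Ev_def fps_mult_nth sum_distrib_left)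
    also have "\<dots> = (\<Sum>i=0..n. Ev f $ i * g $ (n - i))"
    proof (rule sum.cong[OF refl])
      fix i assume "i \<in> {0..n}"
      then have "odd i \<Longrightarrow> odd (n - i)" using True by auto
      then show "2 * (f $ i * g $ (n - i)) = Ev f $ i * g $ (n - i)"
        using g by (auto simp: Ev_def evenf_def)
    qed
    finally show ?thesis by (simp add: fps_mult_nth)
  next
    case False
    have "(Ev f * g) $ n = (\<Sum>i=0..n. Ev f $ i * g $ (n - i))" by (simp add: fps_mult_nth)
    also have "\<dots> = 0"
    proof (rule sum.neutral, rule ballI)
      fix i assume "i \<in> {0..n}"
      then have "even i \<Longrightarrow> odd (n - i)" using False by auto
      then show "Ev f $ i * g $ (n - i) = 0"
        using g by (auto simp: Ev_def evenf_def)
    qed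
    finally show ?thesis using False by (simp add: Ev_def)
  qed
qed

lemma evenf_mult: assumes "evenf f" "evenf g" shows "evenf (f * g)"
  unfolding evenf_def
proof (intro allI impI)
  fix n :: nat assume n: "odd n"
  have "(f * g) $ n = (\<Sum>i=0..n. f $ i * g $ (n - i))" by (simp add: fps_mult_nth)
  also have "\<dots> = 0"
  proof (rule sum.neutral, rule ballI)
    fix i assume "i \<in> {0..n}"
    then have oi: "even i \<Longrightarrow> odd (n - i)" using n by auto
    show "f $ i * g $ (n - i) = 0"
    proof (cases "even i")
      case True then show ?thesis using oi assms(2) unfolding evenf_def by simp
    next
      case False then show ?thesis using assms(1) unfolding evenf_def by simp
    qed
  qed
  finally show "(f * g) $ n = 0" .
qed

lemma evenf_quad: "evenf (quad a)"
  by (auto simp: evenf_def quad_def)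

lemma evenf_Qf: "evenf (Qf m)"
proof (induction m)
  case 0 then show ?case by (simp add: Qf_def evenf_def)
next
  case (Suc m) then show ?case by (simp add: Qf_def evenf_mult evenf_quad)
qed

lemma evenf_mono: "even k \<Longrightarrow> evenf (fps_const c * fps_X^k)"
  by (auto simp: evenf_def)

lemma Ev_add: "Ev (f + g) = Ev f + Ev g"
  by (rule fps_ext) (simp add: Ev_def algebra_simps)

lemma Ev_cmult: "Ev (fps_const c * f) = fps_const c * Ev f"
  by (rule fps_ext) (simp add: Ev_def algebra_simps)

lemma Ev_0: "Ev 0 = 0"
  by (rule fps_ext) (simp add: Ev_def)

lemma Ev_conj: "Ev (lin 1 * lin (of_nat (m+1))) = fps_const 2 * quad (of_nat (m+1))"
proof (rule fps_ext)
  fix n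
  have e: "lin 1 * lin (of_nat (m+1)) = 1 + fps_const (of_nat (m+2)) * fps_X + fps_const (of_nat (m+1)) * fps_X^2"
    unfolding lin_mult by (simp add: algebra_simps)
  show "Ev (lin 1 * lin (of_nat (m+1))) $ n = (fps_const 2 * quad (of_nat (m+1))) $ n"
    unfolding e by (auto simp: Ev_def quad_def)
qed

lemma Sub_nth0: "Sub b $ 0 = 0"
  by (simp add: Sub_def)

lemma Subm_Ev: "Ev (Subm m) * (quad (-1) * Qf (Suc m)) =
   fps_const ((-1)^(m+1) * 2^m) * fps_X^(2*m+2) * (fps_const 2 * quad (of_nat (m+1)))"
proof -
  have q1: "lin (-1) * lin 1 = quad (-1)" unfolding lin_mult quad_def by simp
  have q2: "lin (- of_nat (m+1)) * lin (of_nat (m+1)) = quad (- of_nat ((Suc m)^2))"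
    unfolding lin_mult quad_def by (simp add: power2_eq_square algebra_simps)
  have QS: "Qf (Suc m) = Qf m * quad (- of_nat ((Suc m)^2))" by (simp add: Qf_def)
  have "Subm m * (quad (-1) * Qf (Suc m)) =
     (lin (-1) * Qf m * lin (- of_nat (m+1)) * Subm m) * (lin 1 * lin (of_nat (m+1)))"
    unfolding QS q1[symmetric] q2[symmetric] by (simp add: ac_simps)
  also have "\<dots> = fps_const ((-1)^(m+1) * 2^m) * fps_X^(2*m+2) * (lin 1 * lin (of_nat (m+1)))"
    unfolding Subm_closed ..
  finally have A: "Subm m * (quad (-1) * Qf (Suc m)) = (lin 1 * lin (of_nat (m+1))) * (fps_const ((-1)^(m+1) * 2^m) * fps_X^(2*m+2))"
    by (simp add: ac_simps)
  have ev1: "evenf (quad (-1) * Qf (Suc m))" by (simp add: evenf_mult evenf_quad evenf_Qf)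
  have "Ev (Subm m) * (quad (-1) * Qf (Suc m)) = Ev (Subm m * (quad (-1) * Qf (Suc m)))"
    using Ev_mult[OF ev1] by simp
  also have "\<dots> = Ev (lin 1 * lin (of_nat (m+1))) * (fps_const ((-1)^(m+1) * 2^m) * fps_X^(2*m+2))"
    unfolding A by (rule Ev_mult) (rule evenf_mono, simp)
  also have "\<dots> = fps_const ((-1)^(m+1) * 2^m) * fps_X^(2*m+2) * (fps_const 2 * quad (of_nat (m+1)))"
    unfolding Ev_conj by (simp add: ac_simps)
  finally show ?thesis .
qed

definition SK :: "nat \<Rightarrow> rat fps" where "SK K = (\<Sum>m<K. fps_const (Pp m) * Subm m)"
definition RK :: "nat \<Rightarrow> rat fps" where "RK K = quad (-1) * Ev (SK K) + fps_const 2 * fps_X^2"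

lemma Pp_fact: "Pp m * 2^m = fact m * (of_nat (m+1) * fact m)"
proof (induction m)
  case 0 then show ?case by (simp add: Pp_def)
next
  case (Suc m)
  have "Pp (Suc m) * 2^(Suc m) = (Pp m * 2^m) * (2 * cc (Suc m))"
    by (simp add: Pp_def algebra_simps)
  also have "\<dots> = fact m * (of_nat (m+1) * fact m) * (of_nat (m+1) * of_nat (m+2))"
    using Suc by (simp add: cc_def field_simps)
  also have "\<dots> = fact (Suc m) * (of_nat (Suc m + 1) * fact (Suc m))"
    by (simp add: algebra_simps)
  finally show ?case .
qed

lemma cX_quad: "fps_const a * fps_X^i * quad b = fps_const a * fps_X^i + fps_const (a*b) * fps_X^(i+2)"
proof -
  have "fps_const a * fps_X^i * quad b = fps_const a * fps_X^i + fps_const a * fps_X^i * (fps_const b * fps_X^2)"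
    by (simp add: quad_def algebra_simps)
  then show ?thesis unfolding cX_mult by simp
qed

lemma tele: "RK K * Qf K = fps_const (2 * (-1)^K * (fact K)^2 * of_nat (K+1)) * fps_X^(2*K+2)"
proof (induction K)
  case 0 then show ?case by (simp add: RK_def SK_def Qf_def Ev_0 power2_eq_square)
next
  case (Suc K)
  define i where "i = 2*K+2"
  define cK :: rat where "cK = 2 * (-1)^K * (fact K)^2 * of_nat (K+1)"
  define mK :: rat where "mK = (-1)^(K+1) * 2^K"
  have QS: "Qf (Suc K) = Qf K * quad (- of_nat ((Suc K)^2))" by (simp add: Qf_def)
  have RS: "RK (Suc K) = RK K + fps_const (Pp K) * (quad (-1) * Ev (Subm K))"
    by (simp add: RK_def SK_def Ev_add Ev_cmult distrib_left mult.left_commute add_ac)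
  have "RK (Suc K) * Qf (Suc K) = (RK K * Qf K) * quad (- of_nat ((Suc K)^2)) +
      fps_const (Pp K) * (Ev (Subm K) * (quad (-1) * Qf (Suc K)))"
    unfolding RS by (simp add: QS algebra_simps)
  also have "\<dots> = fps_const cK * fps_X^i * quad (- of_nat ((Suc K)^2)) +
      fps_const (Pp K) * (fps_const mK * fps_X^i * (fps_const 2 * quad (of_nat (K+1))))"
    unfolding Suc.IH Subm_Ev cK_def mK_def i_def ..
  also have "fps_const (Pp K) * (fps_const mK * fps_X^i * (fps_const 2 * quad (of_nat (K+1)))) =
      fps_const (Pp K * mK * 2) * fps_X^i * quad (of_nat (K+1))"
    by (simp add: ac_simps)
  finally have A: "RK (Suc K) * Qf (Suc K) = fps_const cK * fps_X^i + fps_const (cK * - of_nat ((Suc K)^2)) * fps_X^(i+2)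
      + (fps_const (Pp K * mK * 2) * fps_X^i + fps_const (Pp K * mK * 2 * of_nat (K+1)) * fps_X^(i+2))"
    unfolding cX_quad .
  have h: "Pp K * 2^K = fact K * (of_nat (K+1) * fact K)" by (rule Pp_fact)
  have e1: "cK + Pp K * mK * 2 = 0"
  proof -
    have "Pp K * mK * 2 = (-1)^(K+1) * 2 * (Pp K * 2^K)" by (simp add: mK_def algebra_simps)
    also have "\<dots> = (-1)^(K+1) * 2 * (fact K * (of_nat (K+1) * fact K))" by (simp only: h)
    finally show ?thesis by (simp add: cK_def algebra_simps power2_eq_square)
  qed
  have e2: "cK * - of_nat ((Suc K)^2) + Pp K * mK * 2 * of_nat (K+1) = 2 * (-1)^(Suc K) * (fact (Suc K))^2 * of_nat (Suc K+1)"
  proof -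
    have "Pp K * mK * 2 * of_nat (K+1) = (-1)^(K+1) * 2 * of_nat (K+1) * (Pp K * 2^K)" by (simp add: mK_def algebra_simps)
    also have "\<dots> = (-1)^(K+1) * 2 * of_nat (K+1) * (fact K * (of_nat (K+1) * fact K))" by (simp only: h)
    finally show ?thesis by (simp add: cK_def algebra_simps power2_eq_square)
  qed
  show ?case
  proof (rule fps_ext)
    fix n
    show "(RK (Suc K) * Qf (Suc K)) $ n = (fps_const (2 * (-1)^(Suc K) * (fact (Suc K))^2 * of_nat (Suc K+1)) * fps_X^(2*Suc K+2)) $ n"
      unfolding A using e1 e2 by (auto simp: i_def algebra_simps)
  qed
qed

lemma order_zero:
  assumes "f * g = fps_const c * fps_X^k" "g $ 0 \<noteq> 0" "n < k"
  shows "f $ n = (0::rat)"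
proof -
  have "f = f * g * inverse g" using assms(2) by (simp add: mult.assoc inverse_mult_eq_1')
  also have "\<dots> = fps_const c * (fps_X^k * inverse g)" using assms(1) by (simp add: mult.assoc)
  finally have "f $ n = c * (fps_X^k * inverse g) $ n" by simp
  then show ?thesis using assms(3) by (simp add: fps_X_power_mult_nth)
qed

lemma Qf_0: "Qf K $ 0 = 1"
proof (induction K)
  case 0 then show ?case by (simp add: Qf_def)
next
  case (Suc K) then show ?case by (simp add: Qf_def quad_def)
qed

lemma SK_0: "SK K $ 0 = 0"
  by (simp add: SK_def fps_sum_nth Subm_def Sub_nth0)

lemma SK_even: assumes "j < K" shows "SK K $ (2*j+2) = -1"
proof -
  define E where "E = Ev (SK K)"
  have R0: "RK K $ n = 0" if "n < 2*K+2" for n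
    using order_zero[OF tele[of K]] Qf_0 that by simp
  have quadE: "(quad (-1) * E) $ n = E $ n - (if n < 2 then 0 else E $ (n-2))" for n
  proof -
    have "quad (-1) * E = E - fps_X^2 * E" by (simp add: quad_def fps_const_m1 algebra_simps)
    then show ?thesis by (simp add: fps_X_power_mult_nth)
  qed
  have RK_n: "RK K $ n = E $ n - (if n < 2 then 0 else E $ (n-2)) + (if n = 2 then 2 else 0)" for n
    unfolding RK_def E_def[symmetric] using quadE[of n] by simp
  have E0: "E $ 0 = 0" by (simp add: E_def Ev_def SK_0)
  have "\<forall>j. j < K \<longrightarrow> E $ (2*j+2) = -2"
  proof (intro allI)
    fix j show "j < K \<longrightarrow> E $ (2*j+2) = -2"
    proof (induction j)
      case 0
      show ?case
      proof
        assume "0 < K"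
        then have "E $ 2 = -2" using R0[of 2] RK_n[of 2] E0 by auto
        then show "E $ (2*0+2) = -2" by (simp add: numeral_2_eq_2)
      qed
    next
      case (Suc j)
      show ?case
      proof
        assume "Suc j < K"
        then have "E $ (2*j+2) = -2" using Suc.IH by simp
        moreover have "RK K $ (2*Suc j+2) = 0" using R0 \<open>Suc j < K\<close> by simp
        ultimately show "E $ (2*Suc j+2) = -2" using RK_n[of "2*Suc j+2"] by simp
      qed
    qed
  qed
  then have "E $ (2*j+2) = -2" using assms by simp
  then show ?thesis by (simp add: E_def Ev_def)
qed


definition Xr :: "nat \<Rightarrow> rat" where "Xr p = (if p = 0 then 1 else 2^(p-1) * hp (p-1))"

lemma hp_rec: "(\<Sum>p\<le>2*n+2. (-1)^p * of_nat ((2*n+2-p) choose p) * Xr p) = 0"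
proof -
  define N where "N = 2*n+2"
  have inner: "(\<Sum>m<N. Pp m * Bt q m) = hp q" if "q < N" for q
  proof -
    have "(\<Sum>m<N. Pp m * Bt q m) = (\<Sum>m\<le>q. Pp m * Bt q m)"
      by (rule sum.mono_neutral_right) (use that in \<open>auto simp: Bt_zero\<close>)
    then show ?thesis by (simp add: hp_def)
  qed
  have "SK N $ N = (\<Sum>m<N. Pp m * (\<Sum>q<N. (-1)^(Suc q) * of_nat ((N - Suc q) choose (Suc q)) * 2^q * Bt q m))"
    by (simp add: SK_def fps_sum_nth Subm_def Sub_def)
  also have "\<dots> = (\<Sum>m<N. \<Sum>q<N. ((-1)^(Suc q) * of_nat ((N - Suc q) choose (Suc q)) * 2^q) * (Pp m * Bt q m))"
    by (simp add: sum_distrib_left ac_simps)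
  also have "\<dots> = (\<Sum>q<N. \<Sum>m<N. ((-1)^(Suc q) * of_nat ((N - Suc q) choose (Suc q)) * 2^q) * (Pp m * Bt q m))"
    by (rule sum.swap)
  also have "\<dots> = (\<Sum>q<N. (-1)^(Suc q) * of_nat ((N - Suc q) choose (Suc q)) * 2^q * (\<Sum>m<N. Pp m * Bt q m))"
    by (simp add: sum_distrib_left)
  also have "\<dots> = (\<Sum>q<N. (-1)^(Suc q) * of_nat ((N - Suc q) choose (Suc q)) * 2^q * hp q)"
    by (intro sum.cong) (auto simp: inner)
  finally have A: "(\<Sum>q<N. (-1)^(Suc q) * of_nat ((N - Suc q) choose (Suc q)) * 2^q * hp q) = -1"
    using SK_even[of n N] by (simp add: N_def)
  define g where "g p = (-1)^p * of_nat ((N-p) choose p) * Xr p" for p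
  have "(\<Sum>p\<le>N. g p) = (\<Sum>p<Suc N. g p)" by (simp only: lessThan_Suc_atMost)
  also have "\<dots> = g 0 + (\<Sum>q<N. g (Suc q))" by (rule sum.lessThan_Suc_shift)
  also have "\<dots> = 1 + (\<Sum>q<N. (-1)^(Suc q) * of_nat ((N - Suc q) choose (Suc q)) * 2^q * hp q)"
    by (simp add: g_def Xr_def ac_simps)
  finally show ?thesis using A by (simp add: N_def g_def)
qed



fun Amot :: "nat \<Rightarrow> nat \<Rightarrow> nat" where
  "Amot 0 j = (if j = 0 then 1 else 0)"
| "Amot (Suc n) j = gamma j * Amot n j + beta j * Amot n (Suc j) + (if j = 0 then 0 else alpha (j-1) * Amot n (j-1))"

lemma alpha_cc: "(of_nat (alpha j) :: rat) = cc (Suc j)"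
proof -
  have ev: "even ((j+1)*(j+2))" by auto
  then have "(j+1)*(j+2) = 2 * alpha j" unfolding alpha_def by auto
  then have "(of_nat ((j+1)*(j+2)) :: rat) = 2 * of_nat (alpha j)" by (metis of_nat_mult of_nat_numeral)
  then show ?thesis by (simp add: cc_def field_simps)
qed

lemma beta_cc: "(of_nat (beta j) :: rat) = cc (Suc j)"
  using alpha_cc by (simp add: alpha_def beta_def)

lemma gamma_cc: "(of_nat (gamma j) :: rat) = cc j + cc (Suc j)"
  by (simp add: gamma_def cc_def field_simps power2_eq_square)

lemma rel1: "(Suc k) * (n choose Suc k) = (n - k) * (n choose k)"
  using binomial_absorption[of k n] binomial_absorb_comp[of n k] by simp

lemma ident: "cc (Suc m) * of_nat (Suc m choose j) - cc m * of_nat (m choose j) =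
  (cc j + cc (Suc j)) * of_nat (m choose j) + cc (Suc j) * of_nat (m choose Suc j)
  + (if j = 0 then 0 else cc j * of_nat (m choose (j-1)))"
proof (cases j)
  case 0 then show ?thesis by (simp add: cc_def field_simps)
next
  case (Suc j')
  define b0 :: rat where "b0 = of_nat (m choose j)"
  define bm :: rat where "bm = of_nat (m choose j')"
  define bp :: rat where "bp = of_nat (m choose Suc j)"
  have top: "of_nat (Suc m choose j) = bm + b0" unfolding b0_def bm_def Suc by simp
  show ?thesis
  proof (cases "j \<le> m")
    case True
    define x :: rat where "x = of_nat m"
    define y :: rat where "y = of_nat j"
    have H1: "(y+1) * bp = (x - y) * b0"
    proof -
      have "Suc j * (m choose Suc j) = (m - j) * (m choose j)" by (rule rel1)
      then have "(of_nat (Suc j * (m choose Suc j)) :: rat) = of_nat ((m - j) * (m choose j))" by simp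
      then show ?thesis using True by (simp add: x_def y_def b0_def bp_def of_nat_diff algebra_simps)
    qed
    have H2: "y * b0 = (x - y + 1) * bm"
    proof -
      have "Suc j' * (m choose Suc j') = (m - j') * (m choose j')" by (rule rel1)
      then have "(of_nat (Suc j' * (m choose Suc j')) :: rat) = of_nat ((m - j') * (m choose j'))" by simp
      then show ?thesis using True Suc by (simp add: x_def y_def b0_def bm_def of_nat_diff algebra_simps)
    qed
    have "2 * (cc (Suc m) * (bm + b0) - cc m * b0 - ((cc j + cc (Suc j)) * b0 + cc (Suc j) * bp + cc j * bm)) =
      (x+y+2) * ((x - y + 1) * bm) + (2*(x+1) - 2*(y+1)^2) * b0 - (y+2) * ((y+1) * bp)"
      by (simp add: cc_def x_def y_def field_simps power2_eq_square)
    also have "\<dots> = (x+y+2) * (y * b0) + (2*(x+1) - 2*(y+1)^2) * b0 - (y+2) * ((x - y) * b0)"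
      using H1 H2 by simp
    also have "\<dots> = 0" by (simp add: algebra_simps power2_eq_square)
    finally have "cc (Suc m) * (bm + b0) - cc m * b0 = (cc j + cc (Suc j)) * b0 + cc (Suc j) * bp + cc j * bm"
      by simp
    then show ?thesis unfolding top using Suc by (simp add: b0_def bp_def bm_def)
  next
    case False
    then have z0: "b0 = 0" "bp = 0" by (simp_all add: b0_def bp_def)
    show ?thesis
    proof (cases "j = Suc m")
      case True
      then show ?thesis unfolding top using z0 Suc by (simp add: bm_def b0_def bp_def binomial_eq_0)
    next
      case False
      then have "bm = 0" using \<open>\<not> j \<le> m\<close> Suc by (simp add: bm_def)
      then show ?thesis unfolding top using z0 Suc by (simp add: bm_def b0_def bp_def binomial_eq_0)
    qed
  qed
qed

lemma Pp_Suc: "Pp (Suc m) = Pp m * cc (Suc m)"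
  by (simp add: Pp_def)

lemma Amot_B: "of_nat (Amot n j) = (\<Sum>m\<le>n. of_nat (m choose j) * Pp m * Bt n m)"
proof (induction n arbitrary: j)
  case 0 then show ?case by (simp add: Pp_def)
next
  case (Suc n)
  define T where "T j = (\<Sum>m\<le>n. of_nat (m choose j) * Pp m * Bt n m)" for j
  have S1: "(\<Sum>m\<le>Suc n. of_nat (m choose j) * Pp m * (if m = 0 then 0 else Bt n (m-1))) =
      (\<Sum>m\<le>n. of_nat (Suc m choose j) * Pp (Suc m) * Bt n m)"
    by (subst sum.atMost_Suc_shift) simp
  have S2: "(\<Sum>m\<le>Suc n. of_nat (m choose j) * Pp m * (cc m * Bt n m)) =
      (\<Sum>m\<le>n. of_nat (m choose j) * Pp m * (cc m * Bt n m))"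
    by (simp add: Bt_zero)
  have "(\<Sum>m\<le>Suc n. of_nat (m choose j) * Pp m * Bt (Suc n) m) =
      (\<Sum>m\<le>Suc n. of_nat (m choose j) * Pp m * (if m = 0 then 0 else Bt n (m-1)))
      - (\<Sum>m\<le>Suc n. of_nat (m choose j) * Pp m * (cc m * Bt n m))"
    by (simp add: sum_subtractf[symmetric] right_diff_distrib del: sum.atMost_Suc)
  also have "\<dots> = (\<Sum>m\<le>n. Pp m * Bt n m * (cc (Suc m) * of_nat (Suc m choose j) - cc m * of_nat (m choose j)))"
    unfolding S1 S2 sum_subtractf[symmetric] by (intro sum.cong) (auto simp: Pp_Suc algebra_simps)
  also have "\<dots> = (\<Sum>m\<le>n. Pp m * Bt n m * ((cc j + cc (Suc j)) * of_nat (m choose j) + cc (Suc j) * of_nat (m choose Suc j)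
      + (if j = 0 then 0 else cc j * of_nat (m choose (j-1)))))"
    unfolding ident ..
  also have "\<dots> = (cc j + cc (Suc j)) * T j + cc (Suc j) * T (Suc j) + (if j = 0 then 0 else cc j * T (j-1))"
    unfolding T_def by (simp add: sum.distrib sum_distrib_left algebra_simps)
  also have "\<dots> = of_nat (Amot (Suc n) j)"
  proof -
    have "of_nat (Amot (Suc n) j) = of_nat (gamma j) * of_nat (Amot n j) + of_nat (beta j) * of_nat (Amot n (Suc j))
       + (if j = 0 then 0 else of_nat (alpha (j-1)) * (of_nat (Amot n (j-1)) :: rat))"
      by simp
    also have "\<dots> = (cc j + cc (Suc j)) * T j + cc (Suc j) * T (Suc j) + (if j = 0 then 0 else cc j * T (j-1))"
      unfolding gamma_cc beta_cc alpha_cc Suc.IH T_def by simp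
    finally show ?thesis by simp
  qed
  finally show ?case by simp
qed


definition mot :: "nat \<Rightarrow> nat \<Rightarrow> (nat \<Rightarrow> nat) set" where
  "mot n j = {f. f 0 = 0 \<and> f n = j \<and>
      (\<forall>k<n. f (Suc k) \<le> f k + 1 \<and> f k \<le> f (Suc k) + 1) \<and> (\<forall>k>n. f k = 0)}"

definition Pw :: "nat \<Rightarrow> (nat \<Rightarrow> nat) \<Rightarrow> nat" where
  "Pw n f = (\<Prod>k<n. wt (f k) (f (Suc k)))"

lemma motzkin_mot: "motzkin n = mot n 0"
  by (simp add: motzkin_def mot_def)

lemma mot_bound: assumes "f \<in> mot n j" "k \<le> n" shows "f k \<le> k"
  using assms(2)
proof (induction k)
  case 0 then show ?case using assms(1) by (simp add: mot_def)
next
  case (Suc k)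
  then have "f (Suc k) \<le> f k + 1" using assms(1) by (simp add: mot_def)
  then show ?case using Suc by simp
qed

lemma finite_mot: "finite (mot n j)"
proof (rule finite_subset)
  show "mot n j \<subseteq> {f. \<forall>x. (x \<in> {..n} \<longrightarrow> f x \<in> {..n}) \<and> (x \<notin> {..n} \<longrightarrow> f x = 0)}"
  proof
    fix f assume f: "f \<in> mot n j"
    have "\<forall>x. (x \<in> {..n} \<longrightarrow> f x \<in> {..n})"
      using mot_bound[OF f] by (auto intro: order_trans)
    moreover have "\<forall>x. (x \<notin> {..n} \<longrightarrow> f x = 0)" using f by (auto simp: mot_def)
    ultimately show "f \<in> {f. \<forall>x. (x \<in> {..n} \<longrightarrow> f x \<in> {..n}) \<and> (x \<notin> {..n} \<longrightarrow> f x = 0)}" by blast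
  qed
  show "finite {f. \<forall>x. (x \<in> {..n} \<longrightarrow> f x \<in> {..n}) \<and> (x \<notin> {..n} \<longrightarrow> f x = (0::nat))}"
    by (rule finite_set_of_finite_funs) auto
qed

lemma Pw_upd: "Pw n (f(Suc n := j)) = Pw n f"
  unfolding Pw_def by (intro prod.cong) auto

lemma Pw_Suc: "Pw (Suc n) f = Pw n f * wt (f n) (f (Suc n))"
  by (simp add: Pw_def)

lemma fiber: assumes "wt i j \<noteq> 0"
  shows "(\<Sum>f\<in>{f. f \<in> mot (Suc n) j \<and> f n = i}. Pw n f) = (\<Sum>g\<in>mot n i. Pw n g)"
proof -
  have ij: "j \<le> i + 1 \<and> i \<le> j + 1" using assms by (auto simp: wt_def split: if_splits)
  show ?thesis
  proof (rule sum.reindex_bij_witness[where i = "\<lambda>g. g(Suc n := j)" and j = "\<lambda>f. f(Suc n := 0)"])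
    fix f assume f: "f \<in> {f. f \<in> mot (Suc n) j \<and> f n = i}"
    then show "f(Suc n := 0, Suc n := j) = f" by (auto simp: mot_def)
    show "f(Suc n := 0) \<in> mot n i" using f by (auto simp: mot_def)
    show "Pw n (f(Suc n := 0)) = Pw n f" using Pw_upd[of n f 0] by (metis fun_upd_triv fun_upd_upd)
  next
    fix g assume g: "g \<in> mot n i"
    then show "g(Suc n := j, Suc n := 0) = g" by (auto simp: mot_def)
    show "g(Suc n := j) \<in> {f. f \<in> mot (Suc n) j \<and> f n = i}"
      using g ij by (auto simp: mot_def less_Suc_eq)
  qed
qed

lemma fiber0: assumes "wt i j = 0"
  shows "(\<Sum>f\<in>{f. f \<in> mot (Suc n) j \<and> f n = i}. Pw (Suc n) f) = 0"
  using assms by (intro sum.neutral) (auto simp: Pw_Suc mot_def)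

lemma W_eq: "(\<Sum>f\<in>mot n j. Pw n f) = Amot n j"
proof (induction n arbitrary: j)
  case 0
  have "mot 0 j = (if j = 0 then {\<lambda>_. 0} else {})"
  proof (cases "j = 0")
    case True
    have "f = (\<lambda>_. 0)" if "f 0 = 0" "\<forall>k>0. f k = (0::nat)" for f :: "nat \<Rightarrow> nat"
    proof
      fix k show "f k = 0" using that by (cases k) auto
    qed
    then have Z: "f \<in> mot 0 j \<Longrightarrow> f = (\<lambda>_. 0)" for f unfolding mot_def by blast
    have "(\<lambda>_. 0) \<in> mot 0 j" using True unfolding mot_def by simp
    then have "mot 0 j = {\<lambda>_. 0}" using Z by blast
    then show ?thesis using True by simp
  next
    case False then show ?thesis by (auto simp: mot_def)
  qed
  then show ?case by (simp add: Pw_def)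
next
  case (Suc n)
  define W where "W i = (\<Sum>g\<in>mot n i. Pw n g)" for i
  have "(\<Sum>f\<in>mot (Suc n) j. Pw (Suc n) f) =
      (\<Sum>i\<le>Suc j. \<Sum>f\<in>{f. f \<in> mot (Suc n) j \<and> f n = i}. Pw (Suc n) f)"
  proof (rule sum.group[symmetric])
    show "finite (mot (Suc n) j)" by (rule finite_mot)
    show "finite {..Suc j}" by simp
    show "(\<lambda>f. f n) ` mot (Suc n) j \<subseteq> {..Suc j}"
      by (auto simp: mot_def)
  qed
  also have "\<dots> = (\<Sum>i\<le>Suc j. wt i j * W i)"
  proof (rule sum.cong[OF refl])
    fix i
    show "(\<Sum>f\<in>{f. f \<in> mot (Suc n) j \<and> f n = i}. Pw (Suc n) f) = wt i j * W i"
    proof (cases "wt i j = 0")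
      case True then show ?thesis using fiber0 by simp
    next
      case False
      have "(\<Sum>f\<in>{f. f \<in> mot (Suc n) j \<and> f n = i}. Pw (Suc n) f) =
          (\<Sum>f\<in>{f. f \<in> mot (Suc n) j \<and> f n = i}. wt i j * Pw n f)"
        by (intro sum.cong) (auto simp: Pw_Suc mot_def)
      also have "\<dots> = wt i j * (\<Sum>f\<in>{f. f \<in> mot (Suc n) j \<and> f n = i}. Pw n f)"
        by (simp add: sum_distrib_left)
      also have "\<dots> = wt i j * W i"
        unfolding fiber[OF False] W_def ..
      finally show ?thesis .
    qed
  qed
  also have "\<dots> = gamma j * W j + beta j * W (Suc j) + (if j = 0 then 0 else alpha (j-1) * W (j-1))"
  proof -
    have "(\<Sum>i\<le>Suc j. wt i j * W i) = wt (Suc j) j * W (Suc j) + wt j j * W j + (\<Sum>i<j. wt i j * W i)"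
      by (simp add: lessThan_Suc_atMost[symmetric])
    moreover have "(\<Sum>i<j. wt i j * W i) = (if j = 0 then 0 else alpha (j-1) * W (j-1))"
    proof (cases j)
      case 0 then show ?thesis by simp
    next
      case (Suc j')
      have "(\<Sum>i<j'. wt i j * W i) = 0" using Suc by (intro sum.neutral) (auto simp: wt_def)
      then show ?thesis using Suc by (simp add: wt_def)
    qed
    ultimately show ?thesis by (simp add: wt_def)
  qed
  also have "\<dots> = Amot (Suc n) j" by (simp add: W_def Suc.IH)
  finally show ?case .
qed



definition Pj :: "nat \<Rightarrow> nat" where "Pj j = (\<Prod>i<j. alpha i)"

lemma alpha_pos: "alpha i > 0"
  by (simp add: alpha_def)

lemma Pj_pos: "Pj j > 0"
  by (simp add: Pj_def alpha_pos)

lemma Amot_low: "n < j \<Longrightarrow> Amot n j = 0"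
proof (induction n arbitrary: j)
  case 0 then show ?case by simp
next
  case (Suc n) then show ?case by simp
qed

lemma Amot_diag: "Amot j j = Pj j"
proof (induction j)
  case 0 then show ?case by (simp add: Pj_def)
next
  case (Suc j) then show ?case by (simp add: Pj_def Amot_low)
qed

definition se :: "nat \<Rightarrow> rat fps" where
  "se j = Abs_fps (\<lambda>n. of_nat (Amot (n+j) j) / of_nat (Pj j))"
definition so :: "nat \<Rightarrow> rat fps" where
  "so j = Abs_fps (\<lambda>n. (of_nat (Amot (n+j) j) + of_nat (Amot (n+j) (Suc j))) / of_nat (Pj j))"
definition s :: "nat \<Rightarrow> rat fps" where
  "s k = (if even k then se (k div 2) else so (k div 2))"

lemma Pj_Suc: "(of_nat (Pj (Suc j)) :: rat) = of_nat (Pj j) * of_nat (alpha j)"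
  by (simp add: Pj_def)

lemma cXnth: "(fps_const c * fps_X * (h :: rat fps)) $ n = (if n = 0 then 0 else c * h $ (n - 1))"
proof -
  have e: "fps_const c * fps_X * h = fps_const c * (fps_X * h)" by (rule mult.assoc)
  show ?thesis unfolding e fps_mult_left_const_nth fps_X_mult_nth by simp
qed

lemma R0: "se 0 = 1 + fps_const (of_nat (alpha 0)) * fps_X * so 0"
proof (rule fps_ext)
  fix n show "se 0 $ n = (1 + fps_const (of_nat (alpha 0)) * fps_X * so 0) $ n"
    by (cases n) (simp_all add: se_def so_def Pj_def alpha_def gamma_def beta_def cXnth)
qed

lemma Rodd: "so j = se j + fps_const (of_nat (alpha j)) * fps_X * se (Suc j)"
proof (rule fps_ext)
  fix n
  have pj: "(of_nat (Pj j) :: rat) \<noteq> 0" using Pj_pos[of j] by simp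
  have al: "(of_nat (alpha j) :: rat) \<noteq> 0" using alpha_pos[of j] by simp
  show "so j $ n = (se j + fps_const (of_nat (alpha j)) * fps_X * se (Suc j)) $ n"
  proof (cases n)
    case 0
    have "Amot j (Suc j) = 0" by (rule Amot_low) simp
    then show ?thesis using 0 by (simp add: se_def so_def cXnth del: Amot.simps)
  next
    case (Suc n')
    have e: "n' + Suc j = n + j" using Suc by simp
    have L: "so j $ n = (of_nat (Amot (n+j) j) + of_nat (Amot (n+j) (Suc j))) / of_nat (Pj j)"
      by (simp add: so_def del: Amot.simps)
    have R: "(se j + fps_const (of_nat (alpha j)) * fps_X * se (Suc j)) $ n =
        of_nat (Amot (n+j) j) / of_nat (Pj j) + of_nat (alpha j) * (of_nat (Amot (n+j) (Suc j)) / of_nat (Pj (Suc j)))"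
      using Suc e by (simp add: se_def cXnth del: Amot.simps)
    show ?thesis unfolding L R Pj_Suc using pj al by (simp add: field_simps del: Amot.simps)
  qed
qed

lemma Reven: "se (Suc j) = so j + fps_const (of_nat (alpha (Suc j))) * fps_X * so (Suc j)"
proof (rule fps_ext)
  fix n
  have pj: "(of_nat (Pj j) :: rat) \<noteq> 0" using Pj_pos[of j] by simp
  have al: "(of_nat (alpha j) :: rat) \<noteq> 0" using alpha_pos[of j] by simp
  show "se (Suc j) $ n = (so j + fps_const (of_nat (alpha (Suc j))) * fps_X * so (Suc j)) $ n"
  proof (cases n)
    case 0
    then show ?thesis using pj al
      by (simp add: se_def so_def cXnth Amot_low Amot_diag Pj_Suc)
  next
    case (Suc n')
    define m where "m = n' + Suc j"
    have rec: "(of_nat (Amot (Suc m) (Suc j)) :: rat) =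
       of_nat (alpha j) * of_nat (Amot m j) + (of_nat (alpha j) + of_nat (alpha (Suc j))) * of_nat (Amot m (Suc j))
       + of_nat (alpha (Suc j)) * of_nat (Amot m (Suc (Suc j)))"
      by (simp add: gamma_cc beta_cc alpha_cc algebra_simps)
    have L: "se (Suc j) $ n = of_nat (Amot (Suc m) (Suc j)) / of_nat (Pj (Suc j))"
      using Suc by (simp add: se_def m_def del: Amot.simps)
    have R: "(so j + fps_const (of_nat (alpha (Suc j))) * fps_X * so (Suc j)) $ n =
       (of_nat (Amot m j) + of_nat (Amot m (Suc j))) / of_nat (Pj j) +
       of_nat (alpha (Suc j)) * ((of_nat (Amot m (Suc j)) + of_nat (Amot m (Suc (Suc j)))) / of_nat (Pj (Suc j)))"
      using Suc by (simp add: so_def cXnth m_def del: Amot.simps)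
    show ?thesis unfolding L R rec Pj_Suc using pj al
      by (simp add: field_simps del: Amot.simps)
  qed
qed

lemma choose2_alpha: "(Suc (Suc j)) choose 2 = alpha j"
  by (simp add: choose_two alpha_def algebra_simps)

lemma dcf_odd: "dcf (2*j+1) = alpha j"
proof -
  have e: "(2*j+1+1) div 2 + 1 = Suc (Suc j)" by simp
  show ?thesis unfolding dcf_def e choose2_alpha ..
qed

lemma dcf_even: "dcf (2*j+2) = alpha j"
proof -
  have e: "(2*j+2+1) div 2 + 1 = Suc (Suc j)" by simp
  show ?thesis unfolding dcf_def e choose2_alpha ..
qed

lemma s0_rel: "s 0 = 1 + fps_const (of_nat (dcf 1)) * fps_X * s 1"
proof -
  have a: "s 0 = se 0" "s 1 = so 0" by (simp_all add: s_def)
  have b: "dcf 1 = alpha 0" using dcf_odd[of 0] by (simp only: mult_0_right add_0)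
  show ?thesis unfolding a b by (rule R0)
qed

lemma s_rel: assumes "1 \<le> m" shows "s m = s (m-1) + fps_const (of_nat (dcf (Suc m))) * fps_X * s (Suc m)"
proof (cases "even m")
  case True
  then obtain q where q: "m = 2*q" by (rule evenE)
  with assms have "q \<ge> 1" by simp
  define j where "j = q - 1"
  have j: "m = 2*j+2" using q \<open>q \<ge> 1\<close> by (simp add: j_def)
  have "s m = se (Suc j)" using j by (simp add: s_def)
  moreover have "s (m-1) = so j" using j by (simp add: s_def)
  moreover have "s (Suc m) = so (Suc j)" using j by (simp add: s_def)
  moreover have "dcf (Suc m) = alpha (Suc j)" using j dcf_odd[of "Suc j"] by simp
  ultimately show ?thesis using Reven[of j] by simp
next
  case False
  then obtain j where j: "m = 2*j+1" using oddE by blast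
  have "s m = so j" using j by (simp add: s_def)
  moreover have "s (m-1) = se j" using j by (simp add: s_def)
  moreover have "s (Suc m) = se (Suc j)" using j by (simp add: s_def)
  moreover have "dcf (Suc m) = alpha j" using j dcf_even[of j] by simp
  ultimately show ?thesis using Rodd[of j] by simp
qed

lemma s_nth0: "s k $ 0 = 1"
proof -
  have "(of_nat (Pj j) :: rat) \<noteq> 0" for j using Pj_pos[of j] by simp
  then show ?thesis by (simp add: s_def se_def so_def Amot_diag Amot_low)
qed

definition Ft :: "nat \<Rightarrow> rat fps" where
  "Ft k = (if k \<le> 1 then s 0 else s (k-1) * inverse (s (k-2)))"

lemma Ft_nth0: "Ft k $ 0 = 1"
  by (simp add: Ft_def s_nth0)

lemma Ft_rel: assumes "1 \<le> k" shows "Ft k = inverse (1 - fps_const (of_nat (dcf k)) * fps_X * Ft (Suc k))"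
proof (cases "k = 1")
  case True
  define d :: rat where "d = of_nat (dcf 1)"
  have i0: "s 0 * inverse (s 0) = 1" by (rule inverse_mult_eq_1') (simp add: s_nth0)
  have "fps_const d * fps_X * (s 1 * inverse (s 0)) = (fps_const d * fps_X * s 1) * inverse (s 0)"
    by (simp add: mult.assoc)
  also have "fps_const d * fps_X * s 1 = s 0 - 1" using s0_rel by (simp add: d_def)
  finally have "1 - fps_const d * fps_X * (s 1 * inverse (s 0)) = inverse (s 0)"
    using i0 by (simp add: algebra_simps)
  then have "inverse (1 - fps_const d * fps_X * (s 1 * inverse (s 0))) = s 0"
    by (simp add: s_nth0)
  then show ?thesis using True by (simp add: Ft_def d_def)
next
  case False
  define k' where "k' = k - 2"
  have k: "k = Suc (Suc k')" using assms False by (simp add: k'_def)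
  define d :: rat where "d = of_nat (dcf k)"
  have rel: "s (Suc k') = s k' + fps_const d * fps_X * s (Suc (Suc k'))"
    using s_rel[of "Suc k'"] k by (simp add: d_def)
  have i1: "s (Suc k') * inverse (s (Suc k')) = 1" by (rule inverse_mult_eq_1') (simp add: s_nth0)
  have "fps_const d * fps_X * (s (Suc (Suc k')) * inverse (s (Suc k'))) = (fps_const d * fps_X * s (Suc (Suc k'))) * inverse (s (Suc k'))"
    by (simp add: mult.assoc)
  also have "fps_const d * fps_X * s (Suc (Suc k')) = s (Suc k') - s k'" using rel by simp
  finally have "1 - fps_const d * fps_X * (s (Suc (Suc k')) * inverse (s (Suc k'))) = s k' * inverse (s (Suc k'))"
    using i1 by (simp add: algebra_simps)
  then have "inverse (1 - fps_const d * fps_X * (s (Suc (Suc k')) * inverse (s (Suc k')))) = s (Suc k') * inverse (s k')"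
    by (simp add: fps_inverse_mult s_nth0 mult.commute)
  then show ?thesis using k by (simp add: Ft_def d_def)
qed

lemma inv_agree:
  fixes f g :: "rat fps"
  assumes agree: "\<forall>i<M. f $ i = g $ i" and f0: "f $ 0 \<noteq> 0" and M: "0 < M" and i: "i < M"
  shows "inverse f $ i = inverse g $ i"
proof -
  have g0: "g $ 0 \<noteq> 0" using agree f0 M by auto
  define dd where "dd = g - f"
  have "fps_cutoff M dd = 0" using agree by (auto simp: fps_eq_iff dd_def)
  then have ddX: "dd = fps_X^M * fps_shift M dd" using fps_shift_cutoff'[of M dd] by simp
  have "inverse f - inverse g = inverse f * dd * inverse g"
  proof -
    have "inverse f * dd * inverse g = inverse f * (g * inverse g) - (inverse f * f) * inverse g"
      by (simp add: dd_def algebra_simps)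
    also have "\<dots> = inverse f - inverse g"
      using inverse_mult_eq_1'[OF g0] inverse_mult_eq_1[OF f0] by simp
    finally show ?thesis by simp
  qed
  also have "\<dots> = fps_X^M * (inverse f * fps_shift M dd * inverse g)"
    by (subst ddX) (simp add: ac_simps)
  finally have "(inverse f - inverse g) $ i = (fps_X^M * (inverse f * fps_shift M dd * inverse g)) $ i" by simp
  then show ?thesis using i by (simp add: fps_X_power_mult_nth)
qed

lemma cf_agree: "1 \<le> k \<Longrightarrow> n \<le> N \<Longrightarrow> cf k N $ n = Ft k $ n"
proof (induction N arbitrary: k n)
  case 0 then show ?case by (simp add: Ft_nth0)
next
  case (Suc N)
  define d :: rat where "d = of_nat (dcf k)"
  have ag: "\<forall>i<Suc (Suc N). (1 - fps_const d * fps_X * cf (Suc k) N) $ i = (1 - fps_const d * fps_X * Ft (Suc k)) $ i"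
  proof (intro allI impI)
    fix i assume "i < Suc (Suc N)"
    then show "(1 - fps_const d * fps_X * cf (Suc k) N) $ i = (1 - fps_const d * fps_X * Ft (Suc k)) $ i"
      using Suc.IH[of "Suc k" "i - 1"] by (simp add: cXnth)
  qed
  have "cf k (Suc N) $ n = inverse (1 - fps_const d * fps_X * cf (Suc k) N) $ n" by (simp add: d_def)
  also have "\<dots> = inverse (1 - fps_const d * fps_X * Ft (Suc k)) $ n"
    by (rule inv_agree[OF ag]) (use Suc.prems in \<open>auto simp: cXnth\<close>)
  also have "\<dots> = Ft k $ n" using Ft_rel[OF Suc.prems(1)] by (simp add: d_def)
  finally show ?case .
qed



lemma pform_iform:
  fixes X :: "nat \<Rightarrow> rat"
  assumes A: "(\<Sum>p\<le>2*n+2. (-1)^p * of_nat ((2*n+2-p) choose p) * X p) = 0"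
  shows "X (n+1) = (\<Sum>i\<le>n. (-1)^i * of_nat ((n+2+i) choose (2*i+2)) * X (n-i))"
proof -
  define g where "g p = (-1)^p * of_nat ((2*n+2-p) choose p) * X p" for p
  define S where "S = (\<Sum>i\<le>n. (-1)^i * of_nat ((n+2+i) choose (2*i+2)) * X (n-i))"
  have un: "{..2*n+2} = {..n+1} \<union> {n+2..2*n+2}" by auto
  have z: "(\<Sum>p\<in>{n+2..2*n+2}. g p) = 0"
    by (intro sum.neutral) (auto simp: g_def binomial_eq_0)
  have "(\<Sum>p\<le>2*n+2. g p) = (\<Sum>p\<le>n+1. g p) + (\<Sum>p\<in>{n+2..2*n+2}. g p)"
    unfolding un by (rule sum.union_disjoint) auto
  also have "(\<Sum>p\<le>n+1. g p) = (\<Sum>p\<le>n. g p) + g (n+1)" by simp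
  also have "(\<Sum>p\<le>n. g p) = (\<Sum>i\<le>n. g (n - i))"
  proof -
    have "(\<Sum>i<Suc n. g (Suc n - Suc i)) = (\<Sum>i<Suc n. g i)" by (rule sum.nat_diff_reindex)
    then show ?thesis by (simp add: lessThan_Suc_atMost)
  qed
  also have "\<dots> = (-1)^n * S"
    unfolding S_def sum_distrib_left
  proof (rule sum.cong[OF refl])
    fix i assume "i \<in> {..n}"
    then have i: "i \<le> n" by simp
    have b: "(n+2+i) choose (n-i) = (n+2+i) choose (2*i+2)"
    proof -
      have "(n+2+i) choose (n-i) = (n+2+i) choose ((n+2+i) - (n-i))"
        by (rule binomial_symmetric) (use i in simp)
      moreover have "(n+2+i) - (n-i) = 2*i+2" using i by simp
      ultimately show ?thesis by (simp only:)
    qed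
    have e: "2*n+2 - (n-i) = n+2+i" using i by simp
    have sg: "(-1::rat)^(n-i) = (-1)^n * (-1)^i"
    proof -
      have "(-1::rat)^n = (-1)^(n-i) * (-1)^i" using i by (simp add: power_add[symmetric])
      then have "(-1::rat)^n * (-1)^i = (-1)^(n-i) * ((-1)^i * (-1)^i)" by (simp add: mult.assoc)
      also have "(-1::rat)^i * (-1)^i = 1" by (simp add: power_add[symmetric] mult_2[symmetric])
      finally show ?thesis by simp
    qed
    show "g (n - i) = (-1)^n * ((-1)^i * of_nat ((n+2+i) choose (2*i+2)) * X (n-i))"
      unfolding g_def e b sg by (simp add: mult.assoc)
  qed
  finally have "(-1)^n * S + g (n+1) + 0 = 0" using A z by (simp add: g_def)
  moreover have "g (n+1) = (-1)^(n+1) * X (n+1)" by (simp add: g_def)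
  ultimately have "(-1)^n * (S - X (n+1)) = 0" by (simp add: algebra_simps)
  then show ?thesis by (simp add: S_def)
qed

lemma Xr_Mp: "Xr p = of_int (Mp p)"
proof (induction p rule: less_induct)
  case (less p)
  show ?case
  proof (cases p)
    case 0 then show ?thesis by (simp add: Xr_def Mp_def)
  next
    case (Suc n)
    have "Xr (n+1) = (\<Sum>i\<le>n. (-1)^i * of_nat ((n+2+i) choose (2*i+2)) * Xr (n-i))"
      by (rule pform_iform[OF hp_rec])
    also have "\<dots> = (\<Sum>i\<le>n. (-1)^i * of_nat ((n+2+i) choose (2*i+2)) * of_int (Mp (n-i)))"
      using less Suc by (intro sum.cong) auto
    also have "\<dots> = of_int (Mp (n+1))"
      unfolding Mp_rec[of n] by simp
    finally show ?thesis using Suc by simp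
  qed
qed

lemma hnorm_Amot: "hnorm n = of_nat (Amot n 0)"
proof -
  have "Xr (n+1) = 2^n * hp n" by (simp add: Xr_def)
  moreover have "Xr (n+1) = of_int (Mp (n+1))" by (rule Xr_Mp)
  moreover have "Mp (n+1) = int (median_genocchi (n+1))"
    by (simp add: Mp_def median_genocchi_def)
  moreover have "hp n = of_nat (Amot n 0)" by (simp add: Amot_B hp_def)
  ultimately show ?thesis by (simp add: hnorm_def field_simps)
qed

theorem corollary3p4:
  shows "(\<forall>n. hnorm n = of_nat (\<Sum>f\<in>motzkin n. \<Prod>k<n. wt (f k) (f (Suc k))))
         \<and> (\<lambda>N. cf 1 N) \<longlonglongrightarrow> Abs_fps hnorm"
proof
  show "\<forall>n. hnorm n = of_nat (\<Sum>f\<in>motzkin n. \<Prod>k<n. wt (f k) (f (Suc k)))"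
    using hnorm_Amot W_eq[of _ 0] by (simp add: motzkin_mot Pw_def)
  show "(\<lambda>N. cf 1 N) \<longlonglongrightarrow> Abs_fps hnorm"
  proof (rule tendsto_fpsI)
    fix n
    show "\<forall>\<^sub>F N in sequentially. cf 1 N $ n = Abs_fps hnorm $ n"
    proof (rule eventually_sequentiallyI[of n])
      fix N assume "n \<le> N"
      then have "cf 1 N $ n = Ft 1 $ n" by (intro cf_agree) auto
      also have "\<dots> = of_nat (Amot n 0)"
        by (simp add: Ft_def s_def se_def Pj_def)
      finally show "cf 1 N $ n = Abs_fps hnorm $ n" by (simp add: hnorm_Amot)
    qed
  qed
qed


end
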